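(* Let $P=\operatorname{conv}(v_0,\ldots,v_d)\subseteq M_{\mathbb{R}}$ be a lattice $d$-simplex that is not unimodularly equivalent to the standard simplex $\Delta_d=\operatorname{conv}(0,e_1,\ldots,e_d)$. Then $\deg(P)\ge\nu_P$.
   Context: $M\cong\mathbb{Z}^d$ is a lattice. Two lattice polytopes are unimodularly equivalent if one is mapped to the other by an affine lattice automorphism of $M$. For a lattice $d$-polytope $P$, the Ehrhart series is $\sum_{k\ge0}|kP\cap M|t^k=h^*_P(t)/(1-t)^{d+1}$ with $h^*_P$ a polynomial of degree at most $d$; $\deg(P)$ is defined as the degree of $h^*_P$ (equivalently, $\deg(P)=d$ if $P$ has an interior lattice point, and otherwise $\deg(P)$ is the smallest $i\ge 0$ such that $kP$ has no interior lattice points for all $1\le k\le d-i$). With $\mathcal{V}$ the vertex set of $P$, $\nu_P$ is the smallest positive integer such that $(k+1)P\cap M=\mathcal{V}+(kP\cap M)$ for all $k\ge\nu_P$. *)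

theory Defs
  imports "HOL-Analysis.Analysis" "HOL-Computational_Algebra.Formal_Power_Series"
begin

text \<open>The lattice M is the integer lattice in real^'n; d = CARD('n).\<close>

definition is_lattice_point :: "real^'n \<Rightarrow> bool" where
  "is_lattice_point x \<longleftrightarrow> (\<forall>i. x $ i \<in> \<int>)"

definition lattice_pts :: "(real^'n) set \<Rightarrow> (real^'n) set" where
  "lattice_pts S = {x \<in> S. is_lattice_point x}"

definition dilate :: "real \<Rightarrow> (real^'n) set \<Rightarrow> (real^'n) set" where
  "dilate k S = (\<lambda>x. k *\<^sub>R x) ` S"

definition ehrhart_series :: "(real^'n) set \<Rightarrow> int fps" where
  "ehrhart_series P = Abs_fps (\<lambda>k. int (card (lattice_pts (dilate (real k) P))))"

definition hstar :: "(real^'n) set \<Rightarrow> int fps" where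
  "hstar P = (1 - fps_X) ^ (CARD('n) + 1) * ehrhart_series P"

definition lattice_degree :: "(real^'n) set \<Rightarrow> nat" where
  "lattice_degree P = Max {i. fps_nth (hstar P) i \<noteq> 0}"

definition nu :: "(real^'n) set \<Rightarrow> nat" where
  "nu P = (LEAST n::nat. 0 < n \<and> (\<forall>k\<ge>n.
      lattice_pts (dilate (real (k + 1)) P) =
      {v + x | v x. v extreme_point_of P \<and> x \<in> lattice_pts (dilate (real k) P)}))"

definition unimod_equiv :: "(real^'n) set \<Rightarrow> (real^'n) set \<Rightarrow> bool" where
  "unimod_equiv P Q \<longleftrightarrow> (\<exists>(A::real^'n^'n) b. (\<forall>i j. A $ i $ j \<in> \<int>) \<and> is_lattice_point b \<and>
      \<bar>det A\<bar> = 1 \<and> (\<lambda>x. A *v x + b) ` P = Q)"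

definition std_simplex :: "(real^'n) set" where
  "std_simplex = convex hull (insert 0 (range (\<lambda>i. axis i 1)))"

end

theory Submission
  imports Defs
begin

lemma lat_add: "is_lattice_point x \<Longrightarrow> is_lattice_point y \<Longrightarrow> is_lattice_point (x + y)"
  by (auto simp: is_lattice_point_def)
lemma lat_diff: "is_lattice_point x \<Longrightarrow> is_lattice_point y \<Longrightarrow> is_lattice_point (x - y)"
  by (auto simp: is_lattice_point_def)
lemma lat_scale: "c \<in> \<int> \<Longrightarrow> is_lattice_point x \<Longrightarrow> is_lattice_point (c *\<^sub>R x)"
  by (auto simp: is_lattice_point_def)
lemma lat_sum: "(\<And>a. a \<in> A \<Longrightarrow> is_lattice_point (f a)) \<Longrightarrow> is_lattice_point (sum f A)"
  by (auto simp: is_lattice_point_def intro!: Ints_sum)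
lemma lat_zero: "is_lattice_point 0" by (simp add: is_lattice_point_def)

lemma finite_lattice_bounded:
  fixes S :: "(real^'n) set"
  assumes "bounded S"
  shows "finite (lattice_pts S)"
proof -
  obtain B where B: "\<And>x. x \<in> S \<Longrightarrow> norm x \<le> B" using assms bounded_iff by blast
  let ?f = "\<lambda>x::real^'n. (\<lambda>i. \<lfloor>x $ i\<rfloor>)"
  have inj: "inj_on ?f (lattice_pts S)"
  proof (rule inj_onI)
    fix x y assume "x \<in> lattice_pts S" "y \<in> lattice_pts S" "?f x = ?f y"
    then have "\<And>i. x $ i = y $ i"
      by (metis (mono_tags, lifting) floor_of_int Ints_cases is_lattice_point_def lattice_pts_def mem_Collect_eq)
    then show "x = y" by (simp add: vec_eq_iff)
  qed
  have "?f ` lattice_pts S \<subseteq> (\<Pi>\<^sub>E i\<in>UNIV. {-\<lceil>B\<rceil>..\<lceil>B\<rceil>})"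
  proof
    fix z assume "z \<in> ?f ` lattice_pts S"
    then obtain x where x: "x \<in> S" "z = ?f x" by (auto simp: lattice_pts_def)
    have "\<And>i. \<bar>x $ i\<bar> \<le> B" using B[OF x(1)] component_le_norm_cart order_trans by blast
    then have "\<And>i. ?f x i \<in> {-\<lceil>B\<rceil>..\<lceil>B\<rceil>}"
    proof -
      fix i
      have a: "-B \<le> x $ i" "x $ i \<le> B" using \<open>\<bar>x $ i\<bar> \<le> B\<close> by auto
      have "-\<lceil>B\<rceil> \<le> \<lfloor>x $ i\<rfloor>" unfolding le_floor_iff using a le_of_int_ceiling[of B] by linarith
      moreover have "\<lfloor>x $ i\<rfloor> \<le> \<lceil>B\<rceil>" using a le_of_int_ceiling[of B] floor_le_ceiling[of "x$i"]
        by (meson ceiling_mono order_trans)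
      ultimately show "?f x i \<in> {-\<lceil>B\<rceil>..\<lceil>B\<rceil>}" by simp
    qed
    then show "z \<in> (\<Pi>\<^sub>E i\<in>UNIV. {-\<lceil>B\<rceil>..\<lceil>B\<rceil>})" using x by auto
  qed
  moreover have "finite (\<Pi>\<^sub>E i\<in>(UNIV::'n set). {-\<lceil>B\<rceil>..\<lceil>B\<rceil>})" by (intro finite_PiE) auto
  ultimately show ?thesis using inj finite_imageD finite_subset by blast
qed


definition NS :: "'a set \<Rightarrow> nat \<Rightarrow> nat" where
  "NS S n = card {m \<in> S \<rightarrow>\<^sub>E (UNIV::nat set). sum m S = n}"

lemma NS_set_finite:
  assumes "finite S" shows "finite {m \<in> S \<rightarrow>\<^sub>E (UNIV::nat set). sum m S = n}"
proof -
  have "{m \<in> S \<rightarrow>\<^sub>E (UNIV::nat set). sum m S = n} \<subseteq> S \<rightarrow>\<^sub>E {0..n}"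
    using member_le_sum[OF _ _ assms] by fastforce
  moreover have "finite (S \<rightarrow>\<^sub>E {0..n})" using assms by (intro finite_PiE) auto
  ultimately show ?thesis using finite_subset by blast
qed

lemma NS_empty: "NS {} n = (if n = 0 then 1 else 0)"
  by (simp add: NS_def PiE_empty_domain)

lemma NS_insert:
  assumes S: "finite S" and a: "a \<notin> S"
  shows "NS (insert a S) n = (\<Sum>i\<le>n. NS S i)"
proof -
  let ?A = "{m \<in> insert a S \<rightarrow>\<^sub>E (UNIV::nat set). sum m (insert a S) = n}"
  let ?B = "SIGMA i:{..n}. {m \<in> S \<rightarrow>\<^sub>E (UNIV::nat set). sum m S = i}"
  let ?f = "\<lambda>m. (sum m S, restrict m S)"
  let ?g = "\<lambda>(i, m'). m'(a := n - i)"
  have sins: "\<And>m. sum m (insert a S) = m a + sum m S" using S a by simp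
  have "bij_betw ?f ?A ?B"
  proof (rule bij_betwI[where g = ?g])
    show "?f \<in> ?A \<rightarrow> ?B" by (auto simp: sins PiE_def extensional_def)
    show "?g \<in> ?B \<rightarrow> ?A"
    proof
      fix y assume "y \<in> ?B"
      then obtain i m' where y: "y = (i, m')" "i \<le> n" "m' \<in> S \<rightarrow>\<^sub>E UNIV" "sum m' S = i" by auto
      have "sum (m'(a := n - i)) S = sum m' S" using a by (intro sum.cong) auto
      then show "?g y \<in> ?A" using y sins[of "m'(a := n - i)"] a
        by (auto simp: PiE_def extensional_def)
    qed
    fix m assume m: "m \<in> ?A"
    then show "?g (?f m) = m" using sins[of m] a by (auto simp: PiE_def extensional_def fun_eq_iff)
  next
    fix y assume "y \<in> ?B"
    then obtain i m' where y: "y = (i, m')" "i \<le> n" "m' \<in> S \<rightarrow>\<^sub>E UNIV" "sum m' S = i" by auto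
    have "sum (m'(a := n - i)) S = sum m' S" using a by (intro sum.cong) auto
    moreover have "restrict (m'(a := n - i)) S = m'" using y(3) a by (auto simp: PiE_def extensional_def fun_eq_iff)
    ultimately show "?f (?g y) = y" using y by simp
  qed
  then have "card ?A = card ?B" by (rule bij_betw_same_card)
  also have "\<dots> = (\<Sum>i\<le>n. NS S i)" unfolding NS_def
    by (rule card_SigmaI) (auto intro: NS_set_finite[OF S])
  finally show ?thesis unfolding NS_def .
qed

definition Gf :: "'a set \<Rightarrow> int fps" where
  "Gf S = Abs_fps (\<lambda>n. int (NS S n))"

lemma one_minus_X_ones: "(1 - fps_X) * Abs_fps (\<lambda>_. 1::int) = 1"
  by (simp add: fps_eq_iff algebra_simps fps_X_mult_nth)

lemma Gf_main: "finite S \<Longrightarrow> (1 - fps_X) ^ card S * Gf S = 1"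
proof (induction S rule: finite_induct)
  case empty
  show ?case by (simp add: fps_eq_iff Gf_def NS_empty)
next
  case (insert a S)
  have "Gf (insert a S) = Gf S * Abs_fps (\<lambda>_. 1)"
    by (simp add: fps_eq_iff Gf_def fps_mult_nth NS_insert[OF insert(1,2)] atLeast0AtMost)
  then have "(1 - fps_X) ^ card (insert a S) * Gf (insert a S)
      = ((1 - fps_X) ^ card S * Gf S) * ((1 - fps_X) * Abs_fps (\<lambda>_. 1))"
    using insert by (simp add: mult_ac)
  then show ?case using insert one_minus_X_ones by simp
qed


locale lsimplex =
  fixes V :: "(real^'n) set"
  assumes finV: "finite V" and neV: "V \<noteq> {}" and indep: "\<not> affine_dependent V"
    and latV: "\<forall>v\<in>V. is_lattice_point v"
begin

definition pt :: "(real^'n \<Rightarrow> real) \<Rightarrow> real^'n" where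
  "pt l = (\<Sum>v\<in>V. l v *\<^sub>R v)"

definition cone :: "real \<Rightarrow> (real^'n) set" where
  "cone k = {x. \<exists>l. (\<forall>v\<in>V. 0 \<le> l v) \<and> sum l V = k \<and> x = pt l}"

definition Bx :: "(real^'n \<Rightarrow> real) set" where
  "Bx = {l \<in> V \<rightarrow>\<^sub>E {0..<1}. sum l V \<in> \<int> \<and> is_lattice_point (pt l)}"

definition ht :: "(real^'n \<Rightarrow> real) \<Rightarrow> nat" where
  "ht l = nat \<lfloor>sum l V\<rfloor>"

lemma pt_add: "pt (\<lambda>v. a v + b v) = pt a + pt b"
  by (simp add: pt_def scaleR_add_left sum.distrib)

lemma pt_nat_lattice: "is_lattice_point (pt (\<lambda>v. real (m v)))"
  unfolding pt_def using latV by (intro lat_sum lat_scale) auto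

lemma dilate_cone:
  assumes k: "k \<ge> 0"
  shows "dilate k (convex hull V) = cone k"
proof (cases "k = 0")
  case True
  have "cone 0 = {0}"
  proof
    show "cone 0 \<subseteq> {0}"
    proof
      fix x assume "x \<in> cone 0"
      then obtain l where l: "\<forall>v\<in>V. 0 \<le> l v" "sum l V = 0" "x = pt l" by (auto simp: cone_def)
      then have "\<forall>v\<in>V. l v = 0" using sum_nonneg_eq_0_iff[OF finV] by blast
      then show "x \<in> {0}" using l by (simp add: pt_def)
    qed
    show "{0} \<subseteq> cone 0" unfolding cone_def
      by (auto intro!: exI[of _ "\<lambda>_. 0"] simp: pt_def)
  qed
  moreover have "convex hull V \<noteq> {}" using neV by simp
  ultimately show ?thesis using True by (simp add: dilate_def image_constant_conv)
next
  case False
  then have kp: "k > 0" using k by simp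
  show ?thesis
  proof
    show "dilate k (convex hull V) \<subseteq> cone k"
    proof
      fix x assume "x \<in> dilate k (convex hull V)"
      then obtain u where u: "\<forall>v\<in>V. 0 \<le> u v" "sum u V = 1" "x = k *\<^sub>R pt u"
        by (auto simp: dilate_def convex_hull_finite[OF finV] pt_def)
      show "x \<in> cone k" unfolding cone_def
        apply (rule CollectI, rule exI[of _ "\<lambda>v. k * u v"])
        using u kp by (auto simp: pt_def scaleR_sum_right sum_distrib_left[symmetric])
    qed
    show "cone k \<subseteq> dilate k (convex hull V)"
    proof
      fix x assume "x \<in> cone k"
      then obtain l where l: "\<forall>v\<in>V. 0 \<le> l v" "sum l V = k" "x = pt l" by (auto simp: cone_def)
      have "pt (\<lambda>v. l v / k) \<in> convex hull V" unfolding convex_hull_finite[OF finV]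
        using l kp by (auto simp: pt_def sum_divide_distrib[symmetric] intro!: exI[of _ "\<lambda>v. l v / k"])
      moreover have "x = k *\<^sub>R pt (\<lambda>v. l v / k)"
        using l kp by (simp add: pt_def scaleR_sum_right)
      ultimately show "x \<in> dilate k (convex hull V)" by (auto simp: dilate_def)
    qed
  qed
qed

lemma uniq:
  assumes "sum l V = sum l' V" "pt l = pt l'" "v \<in> V"
  shows "l v = l' v"
proof (rule ccontr)
  assume "l v \<noteq> l' v"
  have "sum (\<lambda>w. l w - l' w) V = 0" using assms by (simp add: sum_subtractf)
  moreover have "(\<Sum>w\<in>V. (l w - l' w) *\<^sub>R w) = 0"
    using assms by (simp add: pt_def scaleR_diff_left sum_subtractf)
  ultimately have "affine_dependent V"
    unfolding affine_dependent_explicit_finite[OF finV]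
    using \<open>l v \<noteq> l' v\<close> assms(3) by (intro exI[of _ "\<lambda>w. l w - l' w"]) auto
  then show False using indep by simp
qed

lemma ht_eq: "l \<in> Bx \<Longrightarrow> real (ht l) = sum l V"
proof -
  assume l: "l \<in> Bx"
  then have "sum l V \<ge> 0" by (auto simp: Bx_def PiE_def intro!: sum_nonneg)
  moreover obtain z where "sum l V = of_int z" using l by (auto simp: Bx_def elim!: Ints_cases)
  ultimately show ?thesis by (simp add: ht_def)
qed

lemma ht_le: "l \<in> Bx \<Longrightarrow> ht l \<le> card V"
proof -
  assume l: "l \<in> Bx"
  have "sum l V \<le> sum (\<lambda>_. 1) V" using l by (intro sum_mono) (auto simp: Bx_def PiE_def Pi_def less_imp_le)
  then have "real (ht l) \<le> real (card V)" using ht_eq[OF l] by simp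
  then show ?thesis by simp
qed

lemma finite_Bx: "finite Bx"
proof -
  define R where "R = (\<Sum>v\<in>V. norm v)"
  have inj: "inj_on (\<lambda>l. (pt l, ht l)) Bx"
  proof (rule inj_onI)
    fix l l' assume l: "l \<in> Bx" and l': "l' \<in> Bx" and eq: "(pt l, ht l) = (pt l', ht l')"
    then have "sum l V = sum l' V" using ht_eq by (metis prod.inject)
    then have "\<And>v. v \<in> V \<Longrightarrow> l v = l' v" using eq uniq by auto
    then show "l = l'" using l l' by (auto simp: Bx_def intro: PiE_ext)
  qed
  have "(\<lambda>l. (pt l, ht l)) ` Bx \<subseteq> lattice_pts (cball 0 R) \<times> {..card V}"
  proof
    fix z assume "z \<in> (\<lambda>l. (pt l, ht l)) ` Bx"
    then obtain l where l: "l \<in> Bx" "z = (pt l, ht l)" by auto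
    have "norm (pt l) \<le> (\<Sum>v\<in>V. norm (l v *\<^sub>R v))" unfolding pt_def by (rule norm_sum)
    also have "\<dots> \<le> R" unfolding R_def
    proof (rule sum_mono)
      fix v assume "v \<in> V"
      then have "\<bar>l v\<bar> \<le> 1" using l by (auto simp: Bx_def PiE_def Pi_def)
      then show "norm (l v *\<^sub>R v) \<le> norm v"
        by (simp add: mult_left_le_one_le)
    qed
    finally show "z \<in> lattice_pts (cball 0 R) \<times> {..card V}"
      using l ht_le by (auto simp: lattice_pts_def Bx_def)
  qed
  moreover have "finite (lattice_pts (cball 0 R) \<times> {..card V})"
    by (intro finite_cartesian_product finite_lattice_bounded) auto
  ultimately show ?thesis using inj finite_imageD finite_subset by blast
qed


lemma decomp:
  assumes c0: "\<forall>v\<in>V. 0 \<le> c v" and cs: "sum c V = real k" and cl: "is_lattice_point (pt c)"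
  defines "l \<equiv> restrict (\<lambda>v. frac (c v)) V" and "m \<equiv> restrict (\<lambda>v. nat \<lfloor>c v\<rfloor>) V"
  shows "l \<in> Bx" "m \<in> V \<rightarrow>\<^sub>E UNIV" "ht l \<le> k" "sum m V = k - ht l"
    "\<forall>v\<in>V. c v = l v + real (m v)"
proof -
  show cv: "\<forall>v\<in>V. c v = l v + real (m v)"
    using c0 by (auto simp: l_def m_def frac_def)
  have "pt c = pt (\<lambda>v. l v + real (m v))"
    unfolding pt_def using cv by (intro sum.cong) auto
  then have ptc: "pt c = pt l + pt (\<lambda>v. real (m v))" by (simp add: pt_add)
  have "sum c V = sum (\<lambda>v. l v + real (m v)) V" using cv by (intro sum.cong) auto
  then have sc: "sum c V = sum l V + real (sum m V)" by (simp add: sum.distrib)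
  have lat: "is_lattice_point (pt l)"
    using lat_diff[OF cl pt_nat_lattice[of m]] ptc by simp
  have sl: "sum l V = real k - real (sum m V)" using sc cs by simp
  have l01: "l \<in> V \<rightarrow>\<^sub>E {0..<1}" by (auto simp: l_def frac_lt_1)
  have "real k - real (sum m V) \<in> \<int>" by (metis Ints_diff Ints_of_nat)
  then have "sum l V \<in> \<int>" using sl by (simp only:)
  then show lB: "l \<in> Bx" using l01 lat by (simp add: Bx_def)
  show "m \<in> V \<rightarrow>\<^sub>E UNIV" by (simp add: m_def)
  have "sum l V \<ge> 0" using l01 by (auto simp: PiE_def Pi_def intro!: sum_nonneg)
  then have le: "sum m V \<le> k" using sl by (simp del: of_nat_sum)
  have "real (ht l) = real (k - sum m V)" using ht_eq[OF lB] sl le by (simp del: of_nat_sum)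
  then have "ht l = k - sum m V" by (simp only: of_nat_eq_iff)
  then show "ht l \<le> k" "sum m V = k - ht l" using le by auto
qed

lemma sum_km:
  assumes "l \<in> Bx" "ht l \<le> k" "sum m V = k - ht l"
  shows "sum (\<lambda>v. l v + real (m v)) V = real k"
proof -
  have "sum (\<lambda>v. l v + real (m v)) V = sum l V + real (sum m V)" by (simp add: sum.distrib)
  also have "\<dots> = real (ht l) + real (k - ht l)" using ht_eq[OF assms(1)] assms(3) by simp
  finally show ?thesis using assms(2) by simp
qed

lemma card_dilate:
  "card (lattice_pts (dilate (real k) (convex hull V))) = (\<Sum>l\<in>{l\<in>Bx. ht l \<le> k}. NS V (k - ht l))"
proof -
  let ?T = "SIGMA l:{l\<in>Bx. ht l \<le> k}. {m \<in> V \<rightarrow>\<^sub>E (UNIV::nat set). sum m V = k - ht l}"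
  let ?F = "\<lambda>(l, m). pt (\<lambda>v. l v + real (m v))"
  have S: "lattice_pts (dilate (real k) (convex hull V)) = lattice_pts (cone (real k))"
    using dilate_cone by simp
  have "bij_betw ?F ?T (lattice_pts (cone (real k)))"
    unfolding bij_betw_def
  proof (intro conjI)
    show "inj_on ?F ?T"
    proof (rule inj_onI, clarify)
      fix l m l' m'
      assume A: "l \<in> Bx" "ht l \<le> k" "m \<in> V \<rightarrow>\<^sub>E UNIV" "sum m V = k - ht l"
        and B: "l' \<in> Bx" "ht l' \<le> k" "m' \<in> V \<rightarrow>\<^sub>E UNIV" "sum m' V = k - ht l'"
        and eq: "pt (\<lambda>v. l v + real (m v)) = pt (\<lambda>v. l' v + real (m' v))"
      have s1: "sum (\<lambda>v. l v + real (m v)) V = real k"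
        using sum_km[OF A(1) A(2) A(4)] .
      have s2: "sum (\<lambda>v. l' v + real (m' v)) V = real k"
        using sum_km[OF B(1) B(2) B(4)] .
      have e: "\<And>v. v \<in> V \<Longrightarrow> l v + real (m v) = l' v + real (m' v)"
        using uniq[OF _ eq] s1 s2 by simp
      have r: "\<And>v. v \<in> V \<Longrightarrow> l v \<in> {0..<1} \<and> l' v \<in> {0..<1}"
        using A(1) B(1) by (auto simp: Bx_def PiE_def Pi_def)
      have mm: "\<And>v. v \<in> V \<Longrightarrow> m v = m' v"
      proof -
        fix v assume v: "v \<in> V"
        have "\<lfloor>l v + real (m v)\<rfloor> = int (m v)" using r[OF v] by (intro floor_unique) auto
        moreover have "\<lfloor>l' v + real (m' v)\<rfloor> = int (m' v)" using r[OF v] by (intro floor_unique) auto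
        ultimately show "m v = m' v" using e[OF v] by simp
      qed
      have "\<And>v. v \<in> V \<Longrightarrow> l v = l' v" using e mm by fastforce
      moreover have "l \<in> V \<rightarrow>\<^sub>E {0..<1}" "l' \<in> V \<rightarrow>\<^sub>E {0..<1}" using A(1) B(1) by (simp_all add: Bx_def)
      ultimately have "l = l'" by (intro PiE_ext) auto
      moreover have "m = m'" using A(3) B(3) mm by (intro PiE_ext) auto
      ultimately show "l = l' \<and> m = m'" by simp
    qed
    show "?F ` ?T = lattice_pts (cone (real k))"
    proof
      show "?F ` ?T \<subseteq> lattice_pts (cone (real k))"
      proof
        fix z assume "z \<in> ?F ` ?T"
        then obtain p where p: "p \<in> ?T" "z = ?F p" by blast
        obtain l m where lm: "p = (l, m)" by (cases p)
        have A: "l \<in> Bx" "ht l \<le> k" "m \<in> V \<rightarrow>\<^sub>E UNIV" "sum m V = k - ht l"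
          using p(1) unfolding lm by blast+
        have z: "z = pt (\<lambda>v. l v + real (m v))" using p(2) unfolding lm by simp
        have s1: "sum (\<lambda>v. l v + real (m v)) V = real k"
          using sum_km[OF A(1) A(2) A(4)] .
        have "\<forall>v\<in>V. 0 \<le> l v + real (m v)"
        proof
          fix v assume "v \<in> V"
          then have "l v \<in> {0..<1}" using A(1) unfolding Bx_def by blast
          then show "0 \<le> l v + real (m v)" by simp
        qed
        moreover have "is_lattice_point (pt l)" using A(1) unfolding Bx_def by blast
        then have "is_lattice_point (pt (\<lambda>v. l v + real (m v)))"
          unfolding pt_add using lat_add pt_nat_lattice by blast
        ultimately show "z \<in> lattice_pts (cone (real k))"
          using s1 z unfolding lattice_pts_def cone_def by auto
      qed
      show "lattice_pts (cone (real k)) \<subseteq> ?F ` ?T"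
      proof
        fix x assume "x \<in> lattice_pts (cone (real k))"
        then obtain c where c: "\<forall>v\<in>V. 0 \<le> c v" "sum c V = real k" "x = pt c" "is_lattice_point x"
          unfolding lattice_pts_def cone_def by blast
        define l where "l = restrict (\<lambda>v. frac (c v)) V"
        define m where "m = restrict (\<lambda>v. nat \<lfloor>c v\<rfloor>) V"
        have cl: "is_lattice_point (pt c)" using c by simp
        note D' = decomp[OF c(1,2) cl, folded l_def m_def]
        have "pt c = pt (\<lambda>v. l v + real (m v))" unfolding pt_def
          by (rule sum.cong) (use D'(5) in auto)
        then have "x = ?F (l, m)" using c(3) by simp
        moreover have "(l, m) \<in> ?T" using D'(1-4) by blast
        ultimately show "x \<in> ?F ` ?T" by blast
      qed
    qed
  qed
  then have "card (lattice_pts (cone (real k))) = card ?T" by (simp add: bij_betw_same_card)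
  also have "\<dots> = (\<Sum>l\<in>{l\<in>Bx. ht l \<le> k}. NS V (k - ht l))"
    unfolding NS_def using finite_Bx NS_set_finite[OF finV] by (intro card_SigmaI) auto
  finally show ?thesis using S by simp
qed


lemma ehrhart_eq: "ehrhart_series (convex hull V) = (\<Sum>l\<in>Bx. fps_X ^ ht l) * Gf V"
proof (rule fps_ext)
  fix k
  have "fps_nth ((\<Sum>l\<in>Bx. fps_X ^ ht l) * Gf V) k = (\<Sum>l\<in>Bx. fps_nth (fps_X ^ ht l * Gf V) k)"
    by (simp add: sum_distrib_right fps_sum_nth)
  also have "\<dots> = (\<Sum>l\<in>Bx. if ht l \<le> k then int (NS V (k - ht l)) else 0)"
    by (intro sum.cong) (auto simp: fps_X_power_mult_nth Gf_def)
  also have "\<dots> = (\<Sum>l\<in>{l\<in>Bx. ht l \<le> k}. int (NS V (k - ht l)))"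
    using finite_Bx by (simp add: sum.inter_filter)
  also have "\<dots> = int (card (lattice_pts (dilate (real k) (convex hull V))))"
    by (simp add: card_dilate)
  finally show "fps_nth (ehrhart_series (convex hull V)) k = fps_nth ((\<Sum>l\<in>Bx. fps_X ^ ht l) * Gf V) k"
    by (simp add: ehrhart_series_def)
qed

lemma hstar_eq:
  assumes "card V = CARD('n) + 1"
  shows "hstar (convex hull V) = (\<Sum>l\<in>Bx. fps_X ^ ht l)"
proof -
  have "hstar (convex hull V) = (\<Sum>l\<in>Bx. fps_X ^ ht l) * ((1 - fps_X) ^ card V * Gf V)"
    unfolding hstar_def ehrhart_eq assms by (simp add: mult_ac)
  then show ?thesis using Gf_main[OF finV] by simp
qed

lemma degree_eq:
  assumes "card V = CARD('n) + 1"
  shows "lattice_degree (convex hull V) = Max (ht ` Bx)"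
proof -
  have "{i. fps_nth (hstar (convex hull V)) i \<noteq> 0} = ht ` Bx"
  proof -
    have "\<And>i. fps_nth (hstar (convex hull V)) i = int (card {l\<in>Bx. ht l = i})"
      unfolding hstar_eq[OF assms] fps_sum_nth using finite_Bx
      by (simp add: sum.If_cases eq_commute, intro arg_cong[where f=card], blast)
    moreover have "\<And>i. card {l\<in>Bx. ht l = i} \<noteq> 0 \<longleftrightarrow> i \<in> ht ` Bx"
      using finite_Bx by auto
    ultimately show ?thesis by auto
  qed
  then show ?thesis by (simp add: lattice_degree_def)
qed


lemma pt_ind: "v \<in> V \<Longrightarrow> pt (\<lambda>w. if w = v then 1 else 0) = v"
proof -
  assume v: "v \<in> V"
  have "(\<lambda>w. (if w = v then 1 else 0) *\<^sub>R w) = (\<lambda>w. if w = v then w else 0)" by auto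
  then show ?thesis unfolding pt_def by (simp only: sum.delta[OF finV] if_P[OF v])
qed

lemma sum_ind: "v \<in> V \<Longrightarrow> sum (\<lambda>w. if w = v then (1::real) else 0) V = 1"
  using finV by (simp add: sum.delta)

lemma step_prop:
  assumes k: "Max (ht ` Bx) \<le> k"
  shows "lattice_pts (cone (real (k + 1))) = {v + x | v x. v \<in> V \<and> x \<in> lattice_pts (cone (real k))}"
proof
  show "lattice_pts (cone (real (k + 1))) \<subseteq> {v + x | v x. v \<in> V \<and> x \<in> lattice_pts (cone (real k))}"
  proof
    fix x assume "x \<in> lattice_pts (cone (real (k + 1)))"
    then obtain c where c: "\<forall>v\<in>V. 0 \<le> c v" "sum c V = real (k + 1)" "x = pt c" "is_lattice_point x"
      unfolding lattice_pts_def cone_def by blast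
    define l where "l = restrict (\<lambda>v. frac (c v)) V"
    define m where "m = restrict (\<lambda>v. nat \<lfloor>c v\<rfloor>) V"
    have cl: "is_lattice_point (pt c)" using c by simp
    note D' = decomp[OF c(1,2) cl, folded l_def m_def]
    have "ht l \<le> Max (ht ` Bx)" using D'(1) finite_Bx by (intro Max_ge) auto
    then have "sum m V \<noteq> 0" using D'(4) k by linarith
    have "\<exists>v\<in>V. m v \<noteq> 0"
    proof (rule ccontr)
      assume "\<not> (\<exists>v\<in>V. m v \<noteq> 0)"
      then have "sum m V = 0" by simp
      then show False using \<open>sum m V \<noteq> 0\<close> by simp
    qed
    then obtain v where v: "v \<in> V" "m v \<noteq> 0" by blast
    have l0: "l v \<ge> 0" using v(1) by (simp add: l_def)
    have cvv: "c v = l v + real (m v)" using D'(5) v(1) by blast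
    have "real (m v) \<ge> 1" using v(2) by simp
    then have cv1: "c v \<ge> 1" using l0 cvv by linarith
    define c' where "c' = (\<lambda>w. c w - (if w = v then 1 else 0))"
    have c'0: "\<forall>w\<in>V. 0 \<le> c' w" using c(1) cv1 by (auto simp: c'_def)
    have "pt c = pt (\<lambda>w. c' w + (if w = v then 1 else 0))" by (simp add: c'_def)
    then have ptc: "pt c = pt c' + v" using pt_add pt_ind[OF v(1)] by simp
    have "sum c V = sum (\<lambda>w. c' w + (if w = v then 1 else 0)) V" by (simp add: c'_def)
    then have "sum c V = sum c' V + 1" using sum_ind[OF v(1)] by (simp add: sum.distrib)
    then have sc': "sum c' V = real k" using c(2) by simp
    have "is_lattice_point (pt c')" using lat_diff[OF c(4), of v] latV v(1) ptc c(3) by simp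
    then have "pt c' \<in> lattice_pts (cone (real k))"
      using c'0 sc' unfolding lattice_pts_def cone_def by auto
    moreover have "x = v + pt c'" using ptc c(3) by simp
    ultimately show "x \<in> {v + x | v x. v \<in> V \<and> x \<in> lattice_pts (cone (real k))}"
      using v(1) by blast
  qed
  show "{v + x | v x. v \<in> V \<and> x \<in> lattice_pts (cone (real k))} \<subseteq> lattice_pts (cone (real (k + 1)))"
  proof
    fix z assume "z \<in> {v + x | v x. v \<in> V \<and> x \<in> lattice_pts (cone (real k))}"
    then obtain v x where vx: "z = v + x" "v \<in> V" "x \<in> lattice_pts (cone (real k))" by blast
    then obtain c where c: "\<forall>v\<in>V. 0 \<le> c v" "sum c V = real k" "x = pt c" "is_lattice_point x"
      unfolding lattice_pts_def cone_def by blast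
    define c' where "c' = (\<lambda>w. c w + (if w = v then 1 else 0))"
    have "\<forall>w\<in>V. 0 \<le> c' w" using c(1) by (auto simp: c'_def)
    moreover have "sum c' V = real (k + 1)" unfolding c'_def using sum_ind[OF vx(2)] c(2)
      by (simp add: sum.distrib)
    moreover have "pt c' = z" unfolding c'_def pt_add using pt_ind[OF vx(2)] vx(1) c(3) by simp
    moreover have "is_lattice_point z" using vx c(4) latV lat_add by auto
    ultimately show "z \<in> lattice_pts (cone (real (k + 1)))"
      unfolding lattice_pts_def cone_def by blast
  qed
qed


lemma nu_le:
  assumes D: "0 < Max (ht ` Bx)"
  shows "nu (convex hull V) \<le> Max (ht ` Bx)"
  unfolding nu_def
proof (rule Least_le, intro conjI allI impI)
  show "0 < Max (ht ` Bx)" by (rule D)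
  fix k assume k: "Max (ht ` Bx) \<le> k"
  have e: "\<And>v. v extreme_point_of (convex hull V) \<longleftrightarrow> v \<in> V"
    using extreme_point_of_convex_hull_affine_independent[OF indep] by blast
  show "lattice_pts (dilate (real (k + 1)) (convex hull V)) =
      {v + x | v x. v extreme_point_of (convex hull V) \<and> x \<in> lattice_pts (dilate (real k) (convex hull V))}"
    unfolding e dilate_cone[OF of_nat_0_le_iff] using step_prop[OF k] .
qed

lemma pt_int_lattice: "(\<forall>v\<in>V. m v \<in> \<int>) \<Longrightarrow> is_lattice_point (pt m)"
  unfolding pt_def using latV by (intro lat_sum lat_scale) auto

lemma aff_univ:
  assumes "card V = CARD('n) + 1"
  shows "affine hull V = UNIV"
proof -
  have "of_nat (card V) = aff_dim V + 1" using aff_dim_affine_independent[OF indep] .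
  then have "aff_dim V = int (DIM(real^'n))" using assms by simp
  then show ?thesis using aff_dim_eq_full by blast
qed

lemma int_bary:
  assumes card: "card V = CARD('n) + 1" and D: "Max (ht ` Bx) = 0" and y: "is_lattice_point y"
  shows "\<exists>\<mu>. sum \<mu> V = 1 \<and> pt \<mu> = y \<and> (\<forall>v\<in>V. \<mu> v \<in> \<int>)"
proof -
  have "y \<in> affine hull V" using aff_univ[OF card] by simp
  then obtain \<mu> where mu: "sum \<mu> V = 1" "pt \<mu> = y"
    unfolding affine_hull_finite[OF finV] pt_def by blast
  define l where "l = restrict (\<lambda>v. frac (\<mu> v)) V"
  define f where "f = (\<lambda>v. real_of_int \<lfloor>\<mu> v\<rfloor>)"
  have dec: "\<forall>v\<in>V. \<mu> v = l v + f v" by (auto simp: l_def f_def frac_def)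
  have "pt \<mu> = pt (\<lambda>v. l v + f v)" unfolding pt_def using dec by (intro sum.cong) auto
  then have "pt \<mu> = pt l + pt f" by (simp add: pt_add)
  moreover have "is_lattice_point (pt f)" by (rule pt_int_lattice) (auto simp: f_def)
  ultimately have lat: "is_lattice_point (pt l)" using lat_diff[of "pt \<mu>" "pt f"] y mu(2) by simp
  have "sum \<mu> V = sum (\<lambda>v. l v + f v) V" using dec by (intro sum.cong) auto
  then have "sum l V = 1 - sum f V" using mu(1) by (simp add: sum.distrib)
  moreover have "sum f V \<in> \<int>" by (auto simp: f_def intro!: Ints_sum)
  ultimately have "sum l V \<in> \<int>" by simp
  moreover have l01: "l \<in> V \<rightarrow>\<^sub>E {0..<1}" by (auto simp: l_def frac_lt_1)
  ultimately have lB: "l \<in> Bx" using lat by (simp add: Bx_def)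
  then have "ht l \<le> Max (ht ` Bx)" using finite_Bx by (intro Max_ge) auto
  then have "sum l V = 0" using ht_eq[OF lB] D by simp
  moreover have "\<forall>v\<in>V. 0 \<le> l v" using l01 by (auto simp: PiE_def Pi_def)
  ultimately have "\<forall>v\<in>V. l v = 0" using sum_nonneg_eq_0_iff[OF finV] by blast
  then have "\<forall>v\<in>V. \<mu> v \<in> \<int>" using dec by (auto simp: f_def) (metis Ints_of_int)
  then show ?thesis using mu by blast
qed

end

lemma int_mat_lattice:
  fixes A :: "real^'n^'m"
  shows "(\<forall>i j. A$i$j \<in> \<int>) \<Longrightarrow> is_lattice_point x \<Longrightarrow> is_lattice_point (A *v x)"
  unfolding is_lattice_point_def matrix_vector_mult_def by (auto intro!: Ints_sum Ints_mult)

lemma det_int: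
  fixes A :: "real^'n^'n"
  shows "(\<forall>i j. A$i$j \<in> \<int>) \<Longrightarrow> det A \<in> \<int>"
  unfolding det_def by (auto intro!: Ints_sum Ints_mult Ints_prod)

lemma int_unit:
  fixes a b :: real
  assumes "a \<in> \<int>" "b \<in> \<int>" "a * b = 1"
  shows "\<bar>b\<bar> = 1"
proof -
  obtain m n where "a = of_int m" "b = of_int n" using assms(1,2) by (auto elim!: Ints_cases)
  then have "m * n = 1" using assms(3) by (metis of_int_eq_1_iff of_int_mult)
  then have "n = 1 \<or> n = -1" using zmult_eq_1_iff by blast
  then show ?thesis using \<open>b = of_int n\<close> by auto
qed


lemma lat_axis: "is_lattice_point (axis j (1::real))"
  by (simp add: is_lattice_point_def axis_def)

context lsimplex begin

lemma unimod:
  assumes card: "card V = CARD('n) + 1" and D: "Max (ht ` Bx) = 0"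
  shows "unimod_equiv (convex hull V) std_simplex"
proof -
  obtain v0 where v0: "v0 \<in> V" using neV by blast
  define W where "W = V - {v0}"
  have cW: "card W = CARD('n)" using card v0 finV by (simp add: W_def)
  obtain e where e: "bij_betw e (UNIV::'n set) W"
    using finite_same_card_bij[of "UNIV::'n set" W] cW finV by (auto simp: W_def)
  have eV: "\<And>c. e c \<in> V" using e by (auto simp: bij_betw_def W_def)
  define M :: "real^'n^'n" where "M = (\<chi> r c. (e c - v0) $ r)"
  have colM: "\<And>c. column c M = e c - v0" by (simp add: M_def column_def vec_eq_iff)
  have Mv: "\<And>x. M *v x = (\<Sum>c\<in>UNIV. x$c *\<^sub>R (e c - v0))"
    by (simp add: matrix_mult_sum colM scalar_mult_eq_scaleR)
  have Mint: "\<forall>i j. M$i$j \<in> \<int>"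
    using latV eV v0 by (auto simp: M_def is_lattice_point_def)
  have key: "\<And>\<mu>. sum \<mu> V = 1 \<Longrightarrow> pt \<mu> - v0 = M *v (\<chi> c. \<mu> (e c))"
  proof -
    fix \<mu> :: "real^'n \<Rightarrow> real" assume s: "sum \<mu> V = 1"
    have "(\<Sum>v\<in>V. \<mu> v *\<^sub>R (v - v0)) = pt \<mu> - (sum \<mu> V) *\<^sub>R v0"
      unfolding pt_def by (simp add: scaleR_diff_right sum_subtractf scaleR_sum_left)
    then have "pt \<mu> - v0 = (\<Sum>v\<in>V. \<mu> v *\<^sub>R (v - v0))" using s by simp
    also have "\<dots> = (\<Sum>v\<in>W. \<mu> v *\<^sub>R (v - v0))"
      using sum.remove[OF finV v0, of "\<lambda>v. \<mu> v *\<^sub>R (v - v0)"] by (simp add: W_def)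
    also have "\<dots> = (\<Sum>c\<in>UNIV. \<mu> (e c) *\<^sub>R (e c - v0))"
      using sum.reindex_bij_betw[OF e, of "\<lambda>v. \<mu> v *\<^sub>R (v - v0)"] by simp
    finally show "pt \<mu> - v0 = M *v (\<chi> c. \<mu> (e c))" using Mv by simp
  qed
  have surjM: "surj (\<lambda>x. M *v x)"
  proof -
    have "\<exists>x. y = M *v x" for y :: "real^'n"
    proof -
      have "y + v0 \<in> affine hull V" using aff_univ[OF card] by simp
      then obtain \<mu> where mu: "sum \<mu> V = 1" "pt \<mu> = y + v0"
        unfolding affine_hull_finite[OF finV] pt_def by blast
      show ?thesis using key[OF mu(1)] mu(2) by auto
    qed
    then show ?thesis by (auto simp: surj_def)
  qed
  have intpre: "\<And>y. is_lattice_point y \<Longrightarrow> \<exists>z. is_lattice_point z \<and> M *v z = y"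
  proof -
    fix y :: "real^'n" assume y: "is_lattice_point y"
    have "is_lattice_point (y + v0)" using lat_add[OF y] latV v0 by simp
    then obtain \<mu> where mu: "sum \<mu> V = 1" "pt \<mu> = y + v0" "\<forall>v\<in>V. \<mu> v \<in> \<int>"
      using int_bary[OF card D] by blast
    have "is_lattice_point (\<chi> c. \<mu> (e c))" using mu(3) eV by (simp add: is_lattice_point_def)
    then show "\<exists>z. is_lattice_point z \<and> M *v z = y" using key[OF mu(1)] mu(2) by auto
  qed
  obtain B where MB: "M ** B = mat 1" using matrix_right_invertible_surjective surjM by blast
  then have BM: "B ** M = mat 1" using matrix_left_right_inverse by blast
  have Bint: "\<forall>i j. B$i$j \<in> \<int>"
  proof (intro allI)
    fix i j
    obtain z where z: "is_lattice_point z" "M *v z = axis j 1" using intpre[OF lat_axis] by blast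
    have "B *v axis j 1 = z" using z(2) by (metis BM matrix_vector_mul_assoc matrix_vector_mul_lid)
    then have "B $ i $ j = z $ i" using matrix_vector_mult_basis[of B j] by (simp add: column_def vec_eq_iff)
    then show "B$i$j \<in> \<int>" using z(1) by (simp add: is_lattice_point_def)
  qed
  have "det M * det B = 1" using det_mul[of M B] MB by simp
  then have detB: "\<bar>det B\<bar> = 1" using int_unit det_int Mint Bint by blast
  define b where "b = - (B *v v0)"
  have blat: "is_lattice_point b" using int_mat_lattice[OF Bint, of v0] latV v0
    by (auto simp: b_def is_lattice_point_def)
  have Vins: "V = insert v0 (range e)" using e v0 by (auto simp: bij_betw_def W_def)
  have fe: "\<And>i. B *v e i + b = axis i 1"
  proof -
    fix i
    have "B *v e i + b = B *v (e i - v0)" by (simp add: b_def matrix_vector_mult_diff_distrib)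
    also have "\<dots> = B *v (M *v axis i 1)" using matrix_vector_mult_basis[of M i] colM by simp
    also have "\<dots> = axis i 1" by (simp add: matrix_vector_mul_assoc BM)
    finally show "B *v e i + b = axis i 1" .
  qed
  have fV: "(\<lambda>x. B *v x + b) ` V = insert 0 (range (\<lambda>i. axis i 1))"
  proof -
    have "B *v v0 + b = 0" by (simp add: b_def)
    then show ?thesis unfolding Vins image_insert image_image fe by simp
  qed
  have "(\<lambda>x. B *v x + b) ` (convex hull V) = (\<lambda>x. b + x) ` ((\<lambda>x. B *v x) ` (convex hull V))"
    by (simp add: image_image add.commute)
  also have "\<dots> = convex hull ((\<lambda>x. b + x) ` ((\<lambda>x. B *v x) ` V))"
    by (simp add: convex_hull_linear_image convex_hull_translation)
  also have "\<dots> = convex hull ((\<lambda>x. B *v x + b) ` V)" by (simp add: image_image add.commute)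
  finally have img: "(\<lambda>x. B *v x + b) ` (convex hull V) = std_simplex"
    unfolding fV std_simplex_def .
  show ?thesis unfolding unimod_equiv_def using Bint blat detB img by blast
qed

end


theorem mainTheorem3:
  fixes V :: "(real^'n) set"
  assumes "card V = CARD('n) + 1"
    and "\<forall>v\<in>V. is_lattice_point v"
    and "\<not> affine_dependent V"
    and "\<not> unimod_equiv (convex hull V) std_simplex"
  shows "nu (convex hull V) \<le> lattice_degree (convex hull V)"
proof -
  have fin: "finite V" using assms(1) by (intro card_ge_0_finite) simp
  have ne: "V \<noteq> {}" using assms(1) by auto
  interpret lsimplex V using fin ne assms(2,3) by unfold_locales auto
  have "Max (ht ` Bx) \<noteq> 0" using unimod[OF assms(1)] assms(4) by blast
  then have "nu (convex hull V) \<le> Max (ht ` Bx)" using nu_le by simp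
  then show ?thesis using degree_eq[OF assms(1)] by simp
qed

end
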